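(* Let $S,T$ be semigroups and $f:S\to T$ a surjective semigroup homomorphism. If $S$ is an inverse semigroup whose semilattice of idempotents $E(S)$ is well-founded, then $T$ is an inverse semigroup whose semilattice of idempotents $E(T)$ is well-founded.
   Context: An inverse semigroup is a semigroup in which every element $a$ has a unique $b$ with $aba=a$ and $bab=b$. Its idempotents $E(S)$ form a commutative subsemigroup (semilattice) ordered by $e\le f$ iff $ef=e$; it is well-founded if every nonempty subset has a minimal element. *)

theory Defs
  imports Main
begin

definition inverse_semigroup :: "('a \<Rightarrow> 'a \<Rightarrow> 'a) \<Rightarrow> bool" where
  "inverse_semigroup m \<longleftrightarrow> semigroup m \<and>
     (\<forall>a. \<exists>!b. m (m a b) a = a \<and> m (m b a) b = b)"

definition idempotents :: "('a \<Rightarrow> 'a \<Rightarrow> 'a) \<Rightarrow> 'a set" where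
  "idempotents m = {e. m e e = e}"

definition idem_le :: "('a \<Rightarrow> 'a \<Rightarrow> 'a) \<Rightarrow> 'a \<Rightarrow> 'a \<Rightarrow> bool" where
  "idem_le m e f \<longleftrightarrow> m e f = e"

definition idempotents_wf :: "('a \<Rightarrow> 'a \<Rightarrow> 'a) \<Rightarrow> bool" where
  "idempotents_wf m \<longleftrightarrow>
     (\<forall>A. A \<subseteq> idempotents m \<longrightarrow> A \<noteq> {} \<longrightarrow>
        (\<exists>x\<in>A. \<forall>y\<in>A. idem_le m y x \<longrightarrow> y = x))"

end

theory Submission
  imports Defs
begin

lemma inv_uniq:
  assumes "inverse_semigroup m"
    and "m (m a b) a = a" "m (m b a) b = b" "m (m a c) a = a" "m (m c a) c = c"
  shows "b = c"
  using assms unfolding inverse_semigroup_def by blast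

lemma idem_comm:
  assumes I: "inverse_semigroup m" and e: "m e e = e" and g: "m g g = g"
  shows "m e g = m g e"
proof -
  have S: "semigroup m" using I unfolding inverse_semigroup_def by blast
  have A: "\<And>x y z. m (m x y) z = m x (m y z)" using S by (simp add: semigroup.assoc)
  have prod_idem: "m (m u v) (m u v) = m u v" if u: "m u u = u" and v: "m v v = v" for u v
  proof -
    obtain x where x1: "m (m (m u v) x) (m u v) = m u v" and x2: "m (m x (m u v)) x = x"
      using I unfolding inverse_semigroup_def by blast
    define y where "y = m v (m x u)"
    have y1: "m (m (m u v) y) (m u v) = m u v"
    proof -
      have "m (m (m u v) y) (m u v) = m u (m (m v v) (m x (m (m u u) v)))"
        by (simp add: y_def A)
      also have "\<dots> = m u v" using u v x1 by (simp add: A)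
      finally show ?thesis .
    qed
    have y2: "m (m y (m u v)) y = y"
    proof -
      have "m (m y (m u v)) y = m v (m (m (m x (m u v)) x) u)"
        by (simp add: y_def A u v flip: A[of u u v] A[of v v]) 
      also have "\<dots> = y" using x2 by (simp add: y_def A)
      finally show ?thesis .
    qed
    have xy: "x = y" using inv_uniq[OF I x1 x2 y1 y2] .
    have xx: "m x x = x"
    proof -
      have "m y y = m v (m (m (m x (m u v)) x) u)"
        by (simp add: y_def A u v flip: A[of u u v] A[of v v])
      also have "\<dots> = y" using x2 by (simp add: y_def A)
      finally show ?thesis using xy by simp
    qed
    have "m (m x x) x = x" using xx by simp
    hence "m u v = x" using inv_uniq[of m x "m u v" x] I x1 x2 xx
      by (metis xx)
    thus ?thesis using xx by simp
  qed
  have eg: "m (m e g) (m e g) = m e g" using prod_idem e g by blast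
  have ge: "m (m g e) (m g e) = m g e" using prod_idem e g by blast
  have 1: "m (m (m e g) (m g e)) (m e g) = m e g"
  proof -
    have "m (m (m e g) (m g e)) (m e g) = m (m e (m g g)) (m e (m e g))" by (simp add: A)
    also have "\<dots> = m (m e g) (m e g)" using e g by (simp add: A flip: A[of e e])
    finally show ?thesis using eg by simp
  qed
  have 2: "m (m (m g e) (m e g)) (m g e) = m g e"
  proof -
    have "m (m (m g e) (m e g)) (m g e) = m (m g (m e e)) (m g (m g e))" by (simp add: A)
    also have "\<dots> = m (m g e) (m g e)" using e g by (simp add: A flip: A[of g g])
    finally show ?thesis using ge by simp
  qed
  have 3: "m (m (m e g) (m e g)) (m e g) = m e g" using eg by simp
  show ?thesis using inv_uniq[OF I 3 3 1 2] .
qed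

lemma lift_idem:
  assumes I: "inverse_semigroup mS"
    and H: "\<forall>x y. f (mS x y) = mT (f x) (f y)"
    and e: "mT (f a) (f a) = f a"
  shows "\<exists>g. mS g g = g \<and> f g = f a"
proof -
  have S: "semigroup mS" using I unfolding inverse_semigroup_def by blast
  have A: "\<And>x y z. mS (mS x y) z = mS x (mS y z)" using S by (simp add: semigroup.assoc)
  obtain b where b1: "mS (mS (mS a a) b) (mS a a) = mS a a" and b2: "mS (mS b (mS a a)) b = b"
    using I unfolding inverse_semigroup_def by blast
  define g where "g = mS a (mS b a)"
  have "mS g g = mS a (mS (mS (mS b (mS a a)) b) a)" by (simp add: g_def A)
  also have "\<dots> = g" using b2 by (simp add: g_def)
  finally have gg: "mS g g = g" .
  have fb: "mT (mT (f a) (f b)) (f a) = f a"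
  proof -
    have "f (mS (mS (mS a a) b) (mS a a)) = f (mS a a)" using b1 by simp
    hence "mT (mT (mT (f a) (f a)) (f b)) (mT (f a) (f a)) = mT (f a) (f a)" using H by simp
    thus ?thesis using e by simp
  qed
  have "f g = mT (f a) (mT (f b) (f a))" using H by (simp add: g_def)
  also have "\<dots> = f a" using fb H A by (metis)
  finally show ?thesis using gg by blast
qed

theorem mainTheorem14:
  fixes mS :: "'a \<Rightarrow> 'a \<Rightarrow> 'a" and mT :: "'b \<Rightarrow> 'b \<Rightarrow> 'b" and f :: "'a \<Rightarrow> 'b"
  assumes "semigroup mS" and "semigroup mT"
    and "\<forall>x y. f (mS x y) = mT (f x) (f y)"
    and "surj f"
    and "inverse_semigroup mS" and "idempotents_wf mS"
  shows "inverse_semigroup mT \<and> idempotents_wf mT"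
proof -
  note H = assms(3) and I = assms(5)
  have AT: "\<And>x y z. mT (mT x y) z = mT x (mT y z)" using assms(2) by (simp add: semigroup.assoc)
  have AS: "\<And>x y z. mS (mS x y) z = mS x (mS y z)" using assms(1) by (simp add: semigroup.assoc)
  have liftT: "\<exists>g. mS g g = g \<and> f g = t" if "mT t t = t" for t
  proof -
    obtain a where a: "t = f a" using assms(4) by (metis surjD)
    show ?thesis using lift_idem[OF I H, of a] that a by metis
  qed
  have commT: "mT e g = mT g e" if he: "mT e e = e" and hg: "mT g g = g" for e g
  proof -
    obtain e' where e': "mS e' e' = e'" "f e' = e" using liftT[OF he] by blast
    obtain g' where g': "mS g' g' = g'" "f g' = g" using liftT[OF hg] by blast
    have "mS e' g' = mS g' e'" using idem_comm[OF I e'(1) g'(1)] .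
    hence "f (mS e' g') = f (mS g' e')" by simp
    thus ?thesis using H e' g' by simp
  qed
  have inv: "inverse_semigroup mT"
    unfolding inverse_semigroup_def
  proof (intro conjI allI)
    show "semigroup mT" by fact
    fix b
    obtain a where a: "b = f a" using assms(4) by (metis surjD)
    obtain c where c: "mS (mS a c) a = a" "mS (mS c a) c = c"
      using I unfolding inverse_semigroup_def by blast
    have ex: "mT (mT b (f c)) b = b \<and> mT (mT (f c) b) (f c) = f c"
      using c H a by (metis)
    show "\<exists>!c. mT (mT b c) b = b \<and> mT (mT c b) c = c"
    proof (rule ex1I[of _ "f c"])
      show "mT (mT b (f c)) b = b \<and> mT (mT (f c) b) (f c) = f c" by (rule ex)
    next
      have U: "x = y" if x: "mT (mT b x) b = b" "mT (mT x b) x = x"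
          and y: "mT (mT b y) b = b" "mT (mT y b) y = y" for x y
      proof -
        have ix: "mT (mT x b) (mT x b) = mT x b" "mT (mT b x) (mT b x) = mT b x"
          using x by (metis AT)+
        have iy: "mT (mT y b) (mT y b) = mT y b" "mT (mT b y) (mT b y) = mT b y"
          using y by (metis AT)+
        have "x = mT (mT x b) (mT (mT y b) x)" using x y by (metis AT)
        also have "\<dots> = mT (mT y b) (mT (mT x b) x)"
          using commT[OF ix(1) iy(1)] by (metis AT)
        also have "\<dots> = mT y (mT b x)" using x y by (metis AT)
        finally have 1: "x = mT y (mT b x)" .
        have "y = mT y (mT (mT b x) (mT b y))" using x y by (metis AT)
        also have "\<dots> = mT y (mT (mT b y) (mT b x))"
          using commT[OF ix(2) iy(2)] by simp
        also have "\<dots> = mT y (mT b x)" using x y by (metis AT)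
        finally show ?thesis using 1 by simp
      qed
      fix x assume "mT (mT b x) b = b \<and> mT (mT x b) x = x"
      thus "x = f c" using U ex by blast
    qed
  qed
  have wf: "idempotents_wf mT"
    unfolding idempotents_wf_def
  proof (intro allI impI)
    fix A assume AE: "A \<subseteq> idempotents mT" and Ane: "A \<noteq> {}"
    define B where "B = {e. mS e e = e \<and> f e \<in> A}"
    have "B \<subseteq> idempotents mS" unfolding B_def idempotents_def by blast
    moreover have "B \<noteq> {}"
    proof -
      obtain t where t: "t \<in> A" using Ane by blast
      hence "mT t t = t" using AE unfolding idempotents_def by blast
      then obtain g where "mS g g = g" "f g = t" using liftT by blast
      thus ?thesis using t unfolding B_def by blast
    qed
    ultimately obtain e where eB: "e \<in> B" and emin: "\<forall>y\<in>B. idem_le mS y e \<longrightarrow> y = e"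
      using assms(6) unfolding idempotents_wf_def by blast
    show "\<exists>x\<in>A. \<forall>y\<in>A. idem_le mT y x \<longrightarrow> y = x"
    proof (intro bexI ballI impI)
      show "f e \<in> A" using eB B_def by blast
      fix y assume yA: "y \<in> A" and le: "idem_le mT y (f e)"
      have "mT y y = y" using yA AE unfolding idempotents_def by blast
      then obtain g where g: "mS g g = g" "f g = y" using liftT by blast
      have ee: "mS e e = e" using eB B_def by blast
      have ge_idem: "mS (mS g e) (mS g e) = mS g e"
        using idem_comm[OF I g(1) ee] g(1) ee by (metis AS)
      have "f (mS g e) = y" using H g le unfolding idem_le_def by simp
      hence "mS g e \<in> B" using ge_idem yA unfolding B_def by simp
      moreover have "idem_le mS (mS g e) e" unfolding idem_le_def using ee by (simp add: AS)
      ultimately have "mS g e = e" using emin by blast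
      hence "f (mS g e) = f e" by simp
      thus "y = f e" using \<open>f (mS g e) = y\<close> by simp
    qed
  qed
  show ?thesis using inv wf by blast
qed

end
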